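(* Let $n\ge 3$ and $d=\lfloor n/2\rfloor$. For $x\in Gr^{>0}(2,n)$ with spanning matrix $X$ having all $\Delta_{i,j}(X)>0$ ($i<j$), define $L(x)=D_d/D_1$. Then (1) $L(x)\le E(x)$, and (2) for the cyclic matrix $C$, $E([C])=L([C])=\sin(d\pi/n)/\sin(\pi/n)$.
   Context: For a real $2\times n$ matrix $X$ and $1\le i<j\le n$, $\Delta_{i,j}(X)$ is the determinant of the $2\times2$ submatrix of columns $i,j$. $Gr^{>0}(2,n)$ is the set of 2-dimensional subspaces of $\mathbb{R}^n$ having a spanning $2\times n$ matrix with all $\Delta_{i,j}>0$ ($i<j$); $E(x)=\max_{i<j}\Delta_{i,j}(X)/\min_{i<j}\Delta_{i,j}(X)$. Let $\sigma$ act on strictly increasing pairs by $\sigma(i,j)=(i+1,j+1)$ if $j<n$ and $\sigma(i,n)=(1,i+1)$; $O_k=\{\sigma^m(1,k+1):m=0,\dots,n-1\}$ and $D_k=\left(\prod_{m=0}^{n-1}\Delta_{\sigma^m(1,k+1)}(X)\right)^{1/n}$ for $k\in\{1,\dots,n-1\}$ (the ratio $D_d/D_1$ does not depend on the choice of $X$). The cyclic matrix $C$ has $m$-th column $(\cos((m-1)\pi/n),\sin((m-1)\pi/n))^T$. *)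

theory Defs
  imports Complex_Main
begin

text \<open>A real 2 x n matrix X is represented by its two rows r1 r2 :: nat => real;
  column m (1 <= m <= n) is (r1 m, r2 m). Entries outside 1..n are irrelevant.\<close>

definition Delta :: "(nat \<Rightarrow> real) \<Rightarrow> (nat \<Rightarrow> real) \<Rightarrow> nat \<times> nat \<Rightarrow> real" where
  "Delta r1 r2 p = r1 (fst p) * r2 (snd p) - r1 (snd p) * r2 (fst p)"

definition pairs :: "nat \<Rightarrow> (nat \<times> nat) set" where
  "pairs n = {(i, j). 1 \<le> i \<and> i < j \<and> j \<le> n}"

definition totally_pos :: "nat \<Rightarrow> (nat \<Rightarrow> real) \<Rightarrow> (nat \<Rightarrow> real) \<Rightarrow> bool" where
  "totally_pos n r1 r2 = (\<forall>p \<in> pairs n. Delta r1 r2 p > 0)"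

definition Eratio :: "nat \<Rightarrow> (nat \<Rightarrow> real) \<Rightarrow> (nat \<Rightarrow> real) \<Rightarrow> real" where
  "Eratio n r1 r2 = Max (Delta r1 r2 ` pairs n) / Min (Delta r1 r2 ` pairs n)"

definition sigma :: "nat \<Rightarrow> nat \<times> nat \<Rightarrow> nat \<times> nat" where
  "sigma n p = (if snd p < n then (fst p + 1, snd p + 1) else (1, fst p + 1))"

definition Dmean :: "nat \<Rightarrow> (nat \<Rightarrow> real) \<Rightarrow> (nat \<Rightarrow> real) \<Rightarrow> nat \<Rightarrow> real" where
  "Dmean n r1 r2 k = root n (\<Prod>m<n. Delta r1 r2 ((sigma n ^^ m) (1, k + 1)))"

definition Lratio :: "nat \<Rightarrow> (nat \<Rightarrow> real) \<Rightarrow> (nat \<Rightarrow> real) \<Rightarrow> real" where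
  "Lratio n r1 r2 = Dmean n r1 r2 (n div 2) / Dmean n r1 r2 1"

definition cyc1 :: "nat \<Rightarrow> nat \<Rightarrow> real" where
  "cyc1 n m = cos ((real m - 1) * pi / real n)"
definition cyc2 :: "nat \<Rightarrow> nat \<Rightarrow> real" where
  "cyc2 n m = sin ((real m - 1) * pi / real n)"

end

theory Submission
  imports Defs
begin

lemma sigma_pairs: "p \<in> pairs n \<Longrightarrow> sigma n p \<in> pairs n"
  by (cases p) (auto simp: pairs_def sigma_def)

lemma sigma_iter_pairs: "p \<in> pairs n \<Longrightarrow> (sigma n ^^ m) p \<in> pairs n"
  by (induction m) (auto intro: sigma_pairs)

lemma finite_pairs: "finite (pairs n)"
proof -
  have "pairs n \<subseteq> {1..n} \<times> {1..n}" by (auto simp: pairs_def)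
  thus ?thesis by (rule finite_subset) auto
qed

lemma sin_sym: "sin ((real n - real k) * pi / real n) = sin (real k * pi / real n)"
  if "n > 0" for n k :: nat
proof -
  have "(real n - real k) * pi / real n = pi - real k * pi / real n"
    using that by (simp add: field_simps)
  thus ?thesis by simp
qed

lemma sin_red:
  fixes n k :: nat
  assumes "1 \<le> k" "k < n"
  obtains k' where "1 \<le> k'" "k' \<le> n div 2" "sin (real k * pi / real n) = sin (real k' * pi / real n)"
proof (cases "k \<le> n div 2")
  case True then show ?thesis using that assms by blast
next
  case False
  have "sin (real k * pi / real n) = sin (real (n - k) * pi / real n)"
    using sin_sym[of n k] assms by (simp add: of_nat_diff)
  moreover have "1 \<le> n - k" "n - k \<le> n div 2" using assms False by auto
  ultimately show ?thesis using that by blast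
qed

lemma sin_bounds_half:
  fixes n k :: nat
  assumes "1 \<le> k" "k \<le> n div 2" "n \<ge> 2"
  shows "sin (pi / real n) \<le> sin (real k * pi / real n)"
        "sin (real k * pi / real n) \<le> sin (real (n div 2) * pi / real n)"
        "0 < sin (real k * pi / real n)"
proof -
  have n0: "real n > 0" using assms by simp
  have h: "real (n div 2) * pi / real n \<le> pi / 2"
  proof -
    have "2 * real (n div 2) \<le> real n" by linarith
    hence "real (n div 2) * pi \<le> real n * (pi/2)" by (simp add: field_simps)
    thus ?thesis using n0 by (simp add: divide_le_eq mult.commute)
  qed
  have a: "pi / real n \<le> real k * pi / real n"
    using assms n0 by (simp add: divide_right_mono)
  have b: "real k * pi / real n \<le> real (n div 2) * pi / real n"
    using assms n0 by (intro divide_right_mono mult_right_mono) auto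
  have p0: "0 < pi / real n" using n0 by simp
  show "sin (pi / real n) \<le> sin (real k * pi / real n)"
    using a b h p0 pi_gt_zero by (intro sin_monotone_2pi_le) linarith+
  show "sin (real k * pi / real n) \<le> sin (real (n div 2) * pi / real n)"
    using a b h p0 pi_gt_zero by (intro sin_monotone_2pi_le) linarith+
  show "0 < sin (real k * pi / real n)"
    using a b h p0 pi_gt_zero by (intro sin_gt_zero) linarith+
qed

lemma sin_bounds:
  fixes n k :: nat
  assumes "1 \<le> k" "k < n" "n \<ge> 2"
  shows "sin (pi / real n) \<le> sin (real k * pi / real n)"
        "sin (real k * pi / real n) \<le> sin (real (n div 2) * pi / real n)"
        "0 < sin (real k * pi / real n)"
  using sin_red[OF assms(1,2)] sin_bounds_half[OF _ _ assms(3)] by metis+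

lemma cyc_Delta:
  "Delta (cyc1 n) (cyc2 n) (i, j) = sin ((real j - real i) * pi / real n)"
proof -
  have e: "(real j - real i) * pi / real n = (real j - 1) * pi / real n - (real i - 1) * pi / real n"
    by (simp add: diff_divide_distrib[symmetric] algebra_simps)
  show ?thesis unfolding e by (simp add: Delta_def cyc1_def cyc2_def sin_diff mult.commute)
qed

lemma cyc_Delta_pair:
  assumes "p \<in> pairs n"
  shows "Delta (cyc1 n) (cyc2 n) p = sin (real (snd p - fst p) * pi / real n)"
  using assms by (cases p) (auto simp: pairs_def cyc_Delta of_nat_diff)

lemma cyc_sigma:
  assumes "p \<in> pairs n"
  shows "Delta (cyc1 n) (cyc2 n) (sigma n p) = Delta (cyc1 n) (cyc2 n) p"
proof (cases p)
  case (Pair i j)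
  show ?thesis
  proof (cases "j < n")
    case True thus ?thesis using Pair by (simp add: sigma_def cyc_Delta)
  next
    case False
    hence "j = n" using assms Pair by (auto simp: pairs_def)
    thus ?thesis using Pair assms sin_sym[of n i]
      by (simp add: sigma_def cyc_Delta pairs_def)
  qed
qed

lemma cyc_iter:
  assumes "p \<in> pairs n"
  shows "Delta (cyc1 n) (cyc2 n) ((sigma n ^^ m) p) = Delta (cyc1 n) (cyc2 n) p"
  by (induction m) (auto simp: cyc_sigma sigma_iter_pairs assms)

lemma cyc_Dmean:
  assumes "1 \<le> k" "k < n"
  shows "Dmean n (cyc1 n) (cyc2 n) k = sin (real k * pi / real n)"
proof -
  have p: "(1, k+1) \<in> pairs n" using assms by (auto simp: pairs_def)
  have "(\<Prod>m<n. Delta (cyc1 n) (cyc2 n) ((sigma n ^^ m) (1, k + 1)))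
        = sin (real k * pi / real n) ^ n"
    using cyc_iter[OF p] cyc_Delta_pair[OF p] by simp
  moreover have "0 < sin (real k * pi / real n)" using sin_bounds assms by auto
  ultimately show ?thesis using assms
    by (simp add: Dmean_def real_root_power_cancel)
qed

lemma part1:
  assumes n: "n \<ge> 3" and tp: "totally_pos n r1 r2"
  shows "Lratio n r1 r2 \<le> Eratio n r1 r2"
proof -
  define D where "D = Delta r1 r2"
  define S where "S = D ` pairs n"
  have fS: "finite S" using finite_pairs S_def by simp
  have neS: "S \<noteq> {}" using n unfolding S_def pairs_def by force
  have pos: "\<And>p. p \<in> pairs n \<Longrightarrow> D p > 0" using tp by (simp add: totally_pos_def D_def)
  have minpos: "Min S > 0" using fS neS pos S_def by auto
  have bnd: "Min S \<le> D p \<and> D p \<le> Max S" if "p \<in> pairs n" for p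
    using that fS S_def by auto
  have gen: "Min S \<le> Dmean n r1 r2 k \<and> Dmean n r1 r2 k \<le> Max S" if "1 \<le> k" "k < n" for k
  proof -
    have p: "(1, k+1) \<in> pairs n" using that by (auto simp: pairs_def)
    let ?f = "\<lambda>m. D ((sigma n ^^ m) (1, k + 1))"
    have b: "\<And>m. Min S \<le> ?f m \<and> ?f m \<le> Max S" using bnd sigma_iter_pairs[OF p] by blast
    have b0: "\<And>m. 0 \<le> ?f m" using b minpos by (meson less_le_trans less_imp_le)
    have "(\<Prod>m<n. ?f m) \<le> (\<Prod>m<n. Max S)"
      by (rule prod_mono) (use b b0 minpos in auto)
    hence u: "(\<Prod>m<n. ?f m) \<le> Max S ^ n" by simp
    have "(\<Prod>m<n. Min S) \<le> (\<Prod>m<n. ?f m)"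
      by (rule prod_mono) (use b b0 minpos in auto)
    hence l: "Min S ^ n \<le> (\<Prod>m<n. ?f m)" by simp
    have n0: "0 < n" using n by simp
    have "root n (\<Prod>m<n. ?f m) \<le> root n (Max S ^ n)" using u n0 by simp
    moreover have "root n (Min S ^ n) \<le> root n (\<Prod>m<n. ?f m)" using l n0 by simp
    moreover have "Max S \<ge> 0" using minpos fS neS by (meson Max_ge_iff Min_in less_le_trans not_le order_less_imp_le)
    ultimately show ?thesis using minpos n0
      by (simp add: Dmean_def D_def real_root_power_cancel)
  qed
  have d1: "1 \<le> n div 2" "n div 2 < n" using n by auto
  have A: "Dmean n r1 r2 (n div 2) \<le> Max S" "0 \<le> Dmean n r1 r2 (n div 2)"
    using gen[OF d1] minpos by auto
  have B: "Min S \<le> Dmean n r1 r2 1" using gen[of 1] n by auto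
  have "Lratio n r1 r2 \<le> Max S / Min S"
    unfolding Lratio_def by (rule frac_le) (use A B minpos in auto)
  thus ?thesis by (simp add: Eratio_def S_def D_def)
qed

lemma cyc_E:
  assumes n: "n \<ge> 3"
  shows "Eratio n (cyc1 n) (cyc2 n) = sin (real (n div 2) * pi / real n) / sin (pi / real n)"
proof -
  define S where "S = Delta (cyc1 n) (cyc2 n) ` pairs n"
  have fS: "finite S" using finite_pairs S_def by simp
  have mem: "\<And>p. p \<in> pairs n \<Longrightarrow> 1 \<le> snd p - fst p \<and> snd p - fst p < n"
    by (auto simp: pairs_def)
  have ub: "\<And>x. x \<in> S \<Longrightarrow> x \<le> sin (real (n div 2) * pi / real n)"
    using mem sin_bounds(2) n unfolding S_def by (auto simp: cyc_Delta_pair)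
  have lb: "\<And>x. x \<in> S \<Longrightarrow> sin (pi / real n) \<le> x"
    using mem sin_bounds(1) n unfolding S_def by (auto simp: cyc_Delta_pair)
  have p1: "(1, n div 2 + 1) \<in> pairs n" "(1, 2) \<in> pairs n" using n by (auto simp: pairs_def)
  have i1: "sin (real (n div 2) * pi / real n) \<in> S"
    using cyc_Delta_pair[OF p1(1)] p1(1) unfolding S_def by (metis add_diff_cancel_right' fst_conv image_eqI snd_conv)
  have i2: "sin (pi / real n) \<in> S"
    using cyc_Delta_pair[OF p1(2)] p1(2) unfolding S_def by (force)
  have "Max S = sin (real (n div 2) * pi / real n)"
    by (rule Max_eqI[OF fS ub i1])
  moreover have "Min S = sin (pi / real n)"
    by (rule Min_eqI[OF fS lb i2])
  ultimately show ?thesis by (simp add: Eratio_def S_def)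
qed

theorem mainTheorem8:
  fixes n :: nat
  assumes "n \<ge> 3"
  shows "(\<forall>r1 r2. totally_pos n r1 r2 \<longrightarrow> Lratio n r1 r2 \<le> Eratio n r1 r2)
       \<and> Eratio n (cyc1 n) (cyc2 n) = sin (real (n div 2) * pi / real n) / sin (pi / real n)
       \<and> Lratio n (cyc1 n) (cyc2 n) = sin (real (n div 2) * pi / real n) / sin (pi / real n)"
proof -
  have "Lratio n (cyc1 n) (cyc2 n) = sin (real (n div 2) * pi / real n) / sin (pi / real n)"
    using assms cyc_Dmean[of "n div 2" n] cyc_Dmean[of 1 n] by (simp add: Lratio_def)
  thus ?thesis using part1 cyc_E assms by blast
qed

end
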